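(* Let $H$ be a BF-monoid and consider the conditions: \begin{itemize} \item[(a)] There are submonoids $H_1,H_2\subseteq H$ such that $H=H_1\times H_2$ (internal direct product), where $H_1$ is half-factorial but not a group. \item[(b)] For every rational number $q$ with $1<q<\rho(H)$ there is $c\in H$ such that $\rho(\mathsf L(c^k))=\rho(\mathsf L(c))>q$ for all $k\in\mathbb N$. \item[(b')] (With $H_2$ as in (a).) For every $m\in\mathbb N_{\ge 2}$ there is $L\in\mathcal L(H_2)$ with $\min L=2$ and $\max L=m$. \end{itemize} Then: condition (a) holds whenever $H$ has a cancellative prime element $p$ (with $H_1$ the free abelian monoid generated by $p$ and $H_2=\{a\in H: p\nmid a\}$); condition (b) holds whenever $H$ has accepted elasticity. If conditions (a) and (b) hold, or conditions (a) and (b') hold, then $H$ is fully elastic.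
   Context: A monoid means a commutative semigroup $H$ with identity which is unit-cancellative (if $a=au$ then $u\in H^\times$, the group of units). An atom is a non-unit $u$ such that $u=ab$ implies $a$ or $b$ is a unit. For $a\in H$, $\mathsf L(a)\subseteq\mathbb N_0$ is the set of all $\ell$ such that $a=\varepsilon u_1\cdots u_\ell$ with $\varepsilon\in H^\times$ and atoms $u_i$; $\mathcal L(H)=\{\mathsf L(a):a\in H\}$. $H$ is a BF-monoid if every $\mathsf L(a)$ is finite and nonempty, and half-factorial if $|\mathsf L(a)|=1$ for all $a$. For a finite nonempty $L\subseteq\mathbb N$, $\rho(L)=\max L/\min L$, and $\rho(\{0\})=1$; $\rho(H)=\sup\{\rho(L):L\in\mathcal L(H)\}$. $H$ has accepted elasticity if $\rho(L)=\rho(H)$ for some $L\in\mathcal L(H)$. $H$ is fully elastic if for every rational $q$ with $1<q<\rho(H)$ there is $L\in\mathcal L(H)$ with $\rho(L)=q$. An element $p$ is prime if it is a non-unit and $p\mid ab$ implies $p\mid a$ or $p\mid b$; it is cancellative if $pb=pc$ implies $b=c$. *)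

theory Defs
  imports Main "HOL-Library.Extended_Real"
begin

text \<open>All monoids are subsets S of an ambient commutative monoid type 'a,
  sharing its identity 1 and its multiplication.\<close>

definition units_in :: "'a::comm_monoid_mult set \<Rightarrow> 'a set" where
  "units_in S = {u \<in> S. \<exists>v\<in>S. u * v = 1}"

definition dvd_in :: "'a::comm_monoid_mult set \<Rightarrow> 'a \<Rightarrow> 'a \<Rightarrow> bool" where
  "dvd_in S a b \<longleftrightarrow> (\<exists>c\<in>S. b = a * c)"

definition submonoid :: "'a::comm_monoid_mult set \<Rightarrow> bool" where
  "submonoid S \<longleftrightarrow> 1 \<in> S \<and> (\<forall>a\<in>S. \<forall>b\<in>S. a * b \<in> S)"

definition monoid_in :: "'a::comm_monoid_mult set \<Rightarrow> bool" where
  "monoid_in S \<longleftrightarrow> submonoid S \<and>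
     (\<forall>a\<in>S. \<forall>u\<in>S. a = a * u \<longrightarrow> u \<in> units_in S)"

definition atom_in :: "'a::comm_monoid_mult set \<Rightarrow> 'a \<Rightarrow> bool" where
  "atom_in S u \<longleftrightarrow> u \<in> S \<and> u \<notin> units_in S \<and>
     (\<forall>a\<in>S. \<forall>b\<in>S. u = a * b \<longrightarrow> a \<in> units_in S \<or> b \<in> units_in S)"

definition lengths :: "'a::comm_monoid_mult set \<Rightarrow> 'a \<Rightarrow> nat set" where
  "lengths S a = {l. \<exists>e\<in>units_in S. \<exists>us. length us = l \<and>
       (\<forall>x\<in>set us. atom_in S x) \<and> a = e * prod_list us}"

definition length_sets :: "'a::comm_monoid_mult set \<Rightarrow> nat set set" where
  "length_sets S = lengths S ` S"

definition BF_monoid :: "'a::comm_monoid_mult set \<Rightarrow> bool" where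
  "BF_monoid S \<longleftrightarrow> monoid_in S \<and>
     (\<forall>a\<in>S. finite (lengths S a) \<and> lengths S a \<noteq> {})"

definition half_factorial :: "'a::comm_monoid_mult set \<Rightarrow> bool" where
  "half_factorial S \<longleftrightarrow> (\<forall>a\<in>S. card (lengths S a) = 1)"

definition rho_set :: "nat set \<Rightarrow> real" where
  "rho_set L = (if L = {0} then 1 else real (Max L) / real (Min L))"

definition elasticity :: "'a::comm_monoid_mult set \<Rightarrow> ereal" where
  "elasticity S = (SUP L\<in>length_sets S. ereal (rho_set L))"

definition accepted_elasticity :: "'a::comm_monoid_mult set \<Rightarrow> bool" where
  "accepted_elasticity S \<longleftrightarrow> (\<exists>L\<in>length_sets S. ereal (rho_set L) = elasticity S)"

definition fully_elastic :: "'a::comm_monoid_mult set \<Rightarrow> bool" where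
  "fully_elastic S \<longleftrightarrow> (\<forall>q::rat. 1 < q \<and> ereal (of_rat q) < elasticity S \<longrightarrow>
       (\<exists>L\<in>length_sets S. rho_set L = of_rat q))"

definition prime_in :: "'a::comm_monoid_mult set \<Rightarrow> 'a \<Rightarrow> bool" where
  "prime_in S p \<longleftrightarrow> p \<in> S \<and> p \<notin> units_in S \<and>
     (\<forall>a\<in>S. \<forall>b\<in>S. dvd_in S p (a * b) \<longrightarrow> dvd_in S p a \<or> dvd_in S p b)"

definition cancellative_in :: "'a::comm_monoid_mult set \<Rightarrow> 'a \<Rightarrow> bool" where
  "cancellative_in S p \<longleftrightarrow> p \<in> S \<and> (\<forall>b\<in>S. \<forall>c\<in>S. p * b = p * c \<longrightarrow> b = c)"

definition internal_direct_product ::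
  "'a::comm_monoid_mult set \<Rightarrow> 'a set \<Rightarrow> 'a set \<Rightarrow> bool" where
  "internal_direct_product H H1 H2 \<longleftrightarrow> submonoid H1 \<and> submonoid H2 \<and>
     H1 \<subseteq> H \<and> H2 \<subseteq> H \<and> bij_betw (\<lambda>(a, b). a * b) (H1 \<times> H2) H"

definition cond_a :: "'a::comm_monoid_mult set \<Rightarrow> 'a set \<Rightarrow> 'a set \<Rightarrow> bool" where
  "cond_a H H1 H2 \<longleftrightarrow> internal_direct_product H H1 H2 \<and>
     half_factorial H1 \<and> units_in H1 \<noteq> H1"

definition cond_b :: "'a::comm_monoid_mult set \<Rightarrow> bool" where
  "cond_b H \<longleftrightarrow> (\<forall>q::rat. 1 < q \<and> ereal (of_rat q) < elasticity H \<longrightarrow>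
     (\<exists>c\<in>H. rho_set (lengths H c) > of_rat q \<and>
        (\<forall>k::nat. k \<ge> 1 \<longrightarrow> rho_set (lengths H (c ^ k)) = rho_set (lengths H c))))"

definition cond_b' :: "'a::comm_monoid_mult set \<Rightarrow> bool" where
  "cond_b' H2 \<longleftrightarrow> (\<forall>m::nat. m \<ge> 2 \<longrightarrow>
     (\<exists>L\<in>length_sets H2. Min L = 2 \<and> Max L = m))"

end

theory Submission
  imports Defs
begin


lemma units_in_sub: "units_in S \<subseteq> S" by (auto simp: units_in_def)

lemma units_in_mono: "S \<subseteq> T \<Longrightarrow> units_in S \<subseteq> units_in T"
  by (auto simp: units_in_def)

lemma one_unit: "submonoid S \<Longrightarrow> 1 \<in> units_in S"
  by (auto simp: units_in_def submonoid_def)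

lemma units_mult: "submonoid S \<Longrightarrow> x \<in> units_in S \<Longrightarrow> y \<in> units_in S \<Longrightarrow> x * y \<in> units_in S"
  unfolding units_in_def submonoid_def
proof clarsimp
  fix v w assume "\<forall>a\<in>S. \<forall>b\<in>S. a * b \<in> S" "x \<in> S" "y \<in> S" "v \<in> S" "x * v = 1" "w \<in> S" "y * w = 1"
  then show "\<exists>v\<in>S. x * y * v = 1"
  proof (intro bexI[of _ "v*w"])
    have "x*y*(v*w) = (x*v)*(y*w)" by (simp add: ac_simps)
    then show "x*y*(v*w) = 1" using \<open>x*v=1\<close> \<open>y*w=1\<close> by simp
  qed (use \<open>\<forall>a\<in>S. \<forall>b\<in>S. a * b \<in> S\<close> \<open>v\<in>S\<close> \<open>w\<in>S\<close> in auto)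
qed

lemma unit_factor: "submonoid S \<Longrightarrow> x \<in> S \<Longrightarrow> y \<in> S \<Longrightarrow> x * y \<in> units_in S \<Longrightarrow> x \<in> units_in S"
  unfolding units_in_def submonoid_def
  by (auto, metis mult.assoc)

lemma pow_in: "submonoid S \<Longrightarrow> x \<in> S \<Longrightarrow> x ^ n \<in> S"
  by (induction n) (auto simp: submonoid_def)

lemma prod_in: "submonoid S \<Longrightarrow> set us \<subseteq> S \<Longrightarrow> prod_list us \<in> S"
  by (induction us) (auto simp: submonoid_def)

lemma units_prod: "submonoid S \<Longrightarrow> \<forall>x\<in>set xs. x \<in> units_in S \<Longrightarrow> prod_list xs \<in> units_in S"
  by (induction xs) (auto simp: one_unit units_mult)

lemma atom_in_S: "atom_in S u \<Longrightarrow> u \<in> S" by (simp add: atom_in_def)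

lemma lengths_mult:
  assumes "submonoid S" "l1 \<in> lengths S a" "l2 \<in> lengths S b"
  shows "l1 + l2 \<in> lengths S (a * b)"
proof -
  obtain e1 us1 where 1: "e1 \<in> units_in S" "length us1 = l1" "\<forall>x\<in>set us1. atom_in S x" "a = e1 * prod_list us1"
    using assms(2) by (auto simp: lengths_def)
  obtain e2 us2 where 2: "e2 \<in> units_in S" "length us2 = l2" "\<forall>x\<in>set us2. atom_in S x" "b = e2 * prod_list us2"
    using assms(3) by (auto simp: lengths_def)
  have "a * b = (e1 * e2) * prod_list (us1 @ us2)" using 1 2 by (simp add: ac_simps)
  moreover have "e1 * e2 \<in> units_in S" using 1 2 assms(1) by (simp add: units_mult)
  ultimately show ?thesis using 1 2 unfolding lengths_def
    by (intro CollectI bexI[of _ "e1*e2"] exI[of _ "us1 @ us2"]) auto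
qed

lemma zero_len_one: "submonoid S \<Longrightarrow> 0 \<in> lengths S 1"
  unfolding lengths_def using one_unit by fastforce

lemma lengths_pow:
  assumes "submonoid S" "l \<in> lengths S a"
  shows "k * l \<in> lengths S (a ^ k)"
  using lengths_mult[OF assms(1) assms(2)] zero_len_one[OF assms(1)]
  by (induction k) auto

lemma unit_lengths:
  assumes "submonoid S" "x \<in> units_in S" "l \<in> lengths S x"
  shows "l = 0"
proof (rule ccontr)
  assume "l \<noteq> 0"
  obtain e us where 1: "e \<in> units_in S" "length us = l" "\<forall>x\<in>set us. atom_in S x" "x = e * prod_list us"
    using assms(3) by (auto simp: lengths_def)
  then obtain w rest where us: "us = w # rest" using \<open>l \<noteq> 0\<close> by (cases us) auto
  have wS: "atom_in S w" using 1 us by auto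
  have rS: "prod_list rest \<in> S" using 1 us assms(1) by (intro prod_in) (auto simp: atom_in_def)
  have eS: "e \<in> S" using 1 units_in_sub by auto
  have "w * (e * prod_list rest) \<in> units_in S" using assms(2) 1 us by (simp add: ac_simps)
  then have "w \<in> units_in S" using assms(1) wS rS eS
    by (intro unit_factor[of S w "e * prod_list rest"]) (auto simp: atom_in_def submonoid_def)
  then show False using wS by (simp add: atom_in_def)
qed

lemma zero_len_unit: "0 \<in> lengths S x \<Longrightarrow> x \<in> units_in S"
  by (auto simp: lengths_def)

lemma pow_unit:
  assumes "submonoid S" "a \<in> S" "k \<ge> 1" "a ^ k \<in> units_in S"
  shows "a \<in> units_in S"
proof -
  obtain k' where "k = Suc k'" using assms(3) by (cases k) auto
  then have "a ^ k = a * a ^ k'" by simp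
  then show ?thesis using assms unit_factor pow_in by metis
qed

lemma rho_gt1:
  assumes "rho_set L > 1"
  shows "L \<noteq> {0} \<and> Min L > 0 \<and> rho_set L = real (Max L) / real (Min L)"
proof -
  have "L \<noteq> {0}" using assms by (auto simp: rho_set_def)
  moreover have "Min L \<noteq> 0" using assms calculation by (auto simp: rho_set_def)
  ultimately show ?thesis by (auto simp: rho_set_def)
qed



lemma prod_list_filter:
  fixes f :: "'b \<Rightarrow> 'a::comm_monoid_mult"
  shows "prod_list (map f xs) = prod_list (map f (filter P xs)) * prod_list (map f (filter (\<lambda>x. \<not> P x) xs))"
proof (induction xs)
  case (Cons a xs)
  then show ?case by (cases "P a") (simp_all add: mult.assoc mult.left_commute[of "f a"])
qed simp

locale dprod =
  fixes H H1 H2 :: "'a::comm_monoid_mult set"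
  assumes smH: "submonoid H" and idp: "internal_direct_product H H1 H2"
begin

definition p1 where "p1 x = fst (inv_into (H1 \<times> H2) (\<lambda>(a,b). a*b) x)"
definition p2 where "p2 x = snd (inv_into (H1 \<times> H2) (\<lambda>(a,b). a*b) x)"

lemma sm1: "submonoid H1" and sm2: "submonoid H2" and sub1: "H1 \<subseteq> H" and sub2: "H2 \<subseteq> H"
  and bij: "bij_betw (\<lambda>(a,b). a*b) (H1 \<times> H2) H"
  using idp by (auto simp: internal_direct_product_def)

lemma decomp: assumes "x \<in> H" shows "p1 x \<in> H1" "p2 x \<in> H2" "p1 x * p2 x = x"
proof -
  have x: "x \<in> (\<lambda>(a,b). a*b) ` (H1 \<times> H2)" using bij assms by (simp add: bij_betw_def)
  have "inv_into (H1 \<times> H2) (\<lambda>(a,b). a*b) x \<in> H1 \<times> H2" by (rule inv_into_into[OF x])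
  then show "p1 x \<in> H1" "p2 x \<in> H2" by (auto simp: p1_def p2_def mem_Times_iff)
  have "(\<lambda>(a,b). a*b) (inv_into (H1 \<times> H2) (\<lambda>(a,b). a*b) x) = x" by (rule f_inv_into_f[OF x])
  then show "p1 x * p2 x = x" by (simp add: p1_def p2_def split: prod.splits)
qed

lemma uniq: assumes "a \<in> H1" "b \<in> H2" shows "p1 (a*b) = a" "p2 (a*b) = b"
proof -
  have inj: "inj_on (\<lambda>(a,b). a*b) (H1 \<times> H2)" using bij by (simp add: bij_betw_def)
  have "inv_into (H1 \<times> H2) (\<lambda>(a,b). a*b) ((\<lambda>(a,b). a*b) (a,b)) = (a,b)"
    by (rule inv_into_f_f[OF inj]) (use assms in auto)
  then show "p1 (a*b) = a" "p2 (a*b) = b" by (auto simp: p1_def p2_def)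
qed

lemma uniq': assumes "a \<in> H1" "b \<in> H2" "a' \<in> H1" "b' \<in> H2" "a * b = a' * b'"
  shows "a = a'" "b = b'"
  using uniq[OF assms(1,2)] uniq[OF assms(3,4)] assms(5) by metis+

lemma one_H1: "1 \<in> H1" and one_H2: "1 \<in> H2" using sm1 sm2 by (auto simp: submonoid_def)

lemma p_one: "p1 1 = 1" "p2 1 = 1" using uniq[OF one_H1 one_H2] by auto

lemma p_mult: assumes "x \<in> H" "y \<in> H" shows "p1 (x*y) = p1 x * p1 y" "p2 (x*y) = p2 x * p2 y"
proof -
  have m1: "p1 x * p1 y \<in> H1" using sm1 decomp assms by (auto simp: submonoid_def)
  have m2: "p2 x * p2 y \<in> H2" using sm2 decomp assms by (auto simp: submonoid_def)
  have "x * y = (p1 x * p1 y) * (p2 x * p2 y)"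
    using decomp(3)[OF assms(1)] decomp(3)[OF assms(2)] by (metis mult.assoc mult.commute)
  then show "p1 (x*y) = p1 x * p1 y" "p2 (x*y) = p2 x * p2 y" using uniq[OF m1 m2] by auto
qed

lemma p_H1: "a \<in> H1 \<Longrightarrow> p1 a = a \<and> p2 a = 1" using uniq[OF _ one_H2, of a] by simp
lemma p_H2: "b \<in> H2 \<Longrightarrow> p1 b = 1 \<and> p2 b = b" using uniq[OF one_H1, of b] by simp

lemma units1: assumes "x \<in> H1" "x \<in> units_in H" shows "x \<in> units_in H1"
proof -
  obtain v where v: "v \<in> H" "x * v = 1" using assms by (auto simp: units_in_def)
  have "p1 (x * v) = 1" using v p_one by simp
  then have "x * p1 v = 1" using p_mult[of x v] v assms sub1 p_H1 by auto
  then show ?thesis using assms decomp(1)[OF v(1)] by (auto simp: units_in_def)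
qed

lemma units2: assumes "x \<in> H2" "x \<in> units_in H" shows "x \<in> units_in H2"
proof -
  obtain v where v: "v \<in> H" "x * v = 1" using assms by (auto simp: units_in_def)
  have "p2 (x * v) = 1" using v p_one by simp
  then have "x * p2 v = 1" using p_mult[of x v] v assms sub2 p_H2 by auto
  then show ?thesis using assms decomp(2)[OF v(1)] by (auto simp: units_in_def)
qed

lemma unitsH1: "units_in H1 \<subseteq> units_in H" using units_in_mono[OF sub1] .
lemma unitsH2: "units_in H2 \<subseteq> units_in H" using units_in_mono[OF sub2] .

lemma atom1: assumes "atom_in H1 u" shows "atom_in H u"
proof -
  have uH1: "u \<in> H1" using assms by (simp add: atom_in_def)
  have nu: "u \<notin> units_in H" using assms units1 uH1 by (auto simp: atom_in_def)
  have "a \<in> units_in H \<or> b \<in> units_in H" if ab: "a \<in> H" "b \<in> H" "u = a * b" for a b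
  proof -
    have "p1 a * p1 b = u" using p_mult ab p_H1 uH1 by metis
    then have "p1 a \<in> units_in H1 \<or> p1 b \<in> units_in H1"
      using assms decomp ab by (auto simp: atom_in_def)
    moreover have "p2 a * p2 b = 1" using p_mult ab p_H1 uH1 by metis
    then have "p2 a \<in> units_in H2" "p2 b \<in> units_in H2" using decomp ab
      by (auto simp: units_in_def ac_simps intro: bexI[of _ "p2 a"] bexI[of _ "p2 b"])
    ultimately show ?thesis using unitsH1 unitsH2 units_mult[OF smH] decomp ab by (metis subsetD)
  qed
  then show ?thesis using nu uH1 sub1 by (auto simp: atom_in_def)
qed

lemma atom2: assumes "atom_in H2 u" shows "atom_in H u"
proof -
  have uH2: "u \<in> H2" using assms by (simp add: atom_in_def)
  have nu: "u \<notin> units_in H" using assms units2 uH2 by (auto simp: atom_in_def)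
  have "a \<in> units_in H \<or> b \<in> units_in H" if ab: "a \<in> H" "b \<in> H" "u = a * b" for a b
  proof -
    have "p2 a * p2 b = u" using p_mult ab p_H2 uH2 by metis
    then have "p2 a \<in> units_in H2 \<or> p2 b \<in> units_in H2"
      using assms decomp ab by (auto simp: atom_in_def)
    moreover have "p1 a * p1 b = 1" using p_mult ab p_H2 uH2 by metis
    then have "p1 a \<in> units_in H1" "p1 b \<in> units_in H1" using decomp ab
      by (auto simp: units_in_def ac_simps intro: bexI[of _ "p1 a"] bexI[of _ "p1 b"])
    ultimately show ?thesis using unitsH1 unitsH2 units_mult[OF smH] decomp ab
      by (metis subsetD mult.commute)
  qed
  then show ?thesis using nu uH2 sub2 by (auto simp: atom_in_def)
qed

lemma atom_cases: assumes "atom_in H w"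
  shows "(atom_in H1 (p1 w) \<and> p2 w \<in> units_in H2) \<or> (p1 w \<in> units_in H1 \<and> atom_in H2 (p2 w))"
proof -
  have wH: "w \<in> H" and nu: "w \<notin> units_in H" using assms by (auto simp: atom_in_def)
  note d = decomp[OF wH]
  have "p1 w \<in> units_in H \<or> p2 w \<in> units_in H" 
  proof -
    have "\<forall>a\<in>H. \<forall>b\<in>H. w = a * b \<longrightarrow> a \<in> units_in H \<or> b \<in> units_in H"
      using assms by (simp add: atom_in_def)
    moreover have "p1 w \<in> H" "p2 w \<in> H" using d sub1 sub2 by auto
    ultimately show ?thesis using d(3) by auto
  qed
  then have "p1 w \<in> units_in H1 \<or> p2 w \<in> units_in H2" using units1 units2 d by auto
  then show ?thesis
  proof
    assume u1: "p1 w \<in> units_in H1"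
    have n2: "p2 w \<notin> units_in H2" using u1 nu d unitsH1 unitsH2 units_mult[OF smH] by (metis subsetD)
    have "a \<in> units_in H2 \<or> b \<in> units_in H2" if ab: "a \<in> H2" "b \<in> H2" "p2 w = a * b" for a b
    proof -
      have "w = (p1 w * a) * b" using d ab by (simp add: ac_simps)
      moreover have "p1 w * a \<in> H" using d ab sub1 sub2 smH by (auto simp: submonoid_def)
      ultimately have "p1 w * a \<in> units_in H \<or> b \<in> units_in H" using assms ab sub2 by (auto simp: atom_in_def)
      then show ?thesis using units2 ab unit_factor[OF smH] d sub1 sub2 by (metis mult.commute subsetD)
    qed
    then show ?thesis using u1 n2 d by (auto simp: atom_in_def)
  next
    assume u2: "p2 w \<in> units_in H2"
    have n1: "p1 w \<notin> units_in H1" using u2 nu d unitsH1 unitsH2 units_mult[OF smH] by (metis subsetD)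
    have "a \<in> units_in H1 \<or> b \<in> units_in H1" if ab: "a \<in> H1" "b \<in> H1" "p1 w = a * b" for a b
    proof -
      have "w = a * (b * p2 w)" using d ab by (simp add: ac_simps)
      moreover have "b * p2 w \<in> H" using d ab sub1 sub2 smH by (auto simp: submonoid_def)
      ultimately have "a \<in> units_in H \<or> b * p2 w \<in> units_in H" using assms ab sub1 by (auto simp: atom_in_def)
      then show ?thesis using units1 ab unit_factor[OF smH] d sub1 sub2 by (metis subsetD)
    qed
    then show ?thesis using u2 n1 d by (auto simp: atom_in_def)
  qed
qed

lemma p1_prod: "set us \<subseteq> H \<Longrightarrow> p1 (prod_list us) = prod_list (map p1 us)"
  by (induction us) (auto simp: p_one p_mult prod_in[OF smH])
lemma p2_prod: "set us \<subseteq> H \<Longrightarrow> p2 (prod_list us) = prod_list (map p2 us)"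
  by (induction us) (auto simp: p_one p_mult prod_in[OF smH])

end


locale dprod_hf = dprod + assumes hf: "half_factorial H1"
begin

definition l1 where "l1 a = the_elem (lengths H1 a)"

lemma l1: "a \<in> H1 \<Longrightarrow> lengths H1 a = {l1 a}"
  using hf unfolding half_factorial_def l1_def by (auto simp: card_1_singleton_iff)

lemma char:
  assumes xH: "x \<in> H"
  shows "lengths H x = (\<lambda>n. l1 (p1 x) + n) ` lengths H2 (p2 x)"
proof
  note d = decomp[OF xH]
  show "lengths H x \<subseteq> (\<lambda>n. l1 (p1 x) + n) ` lengths H2 (p2 x)"
  proof
    fix l assume "l \<in> lengths H x"
    then obtain e us where f: "e \<in> units_in H" "length us = l" "\<forall>w\<in>set us. atom_in H w" "x = e * prod_list us"
      by (auto simp: lengths_def)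
    define P where "P = (\<lambda>w. p2 w \<in> units_in H2)"
    define us1 where "us1 = filter P us"
    define us2 where "us2 = filter (\<lambda>w. \<not> P w) us"
    have usH: "set us \<subseteq> H" using f by (auto simp: atom_in_def)
    have eH: "e \<in> H" using f units_in_sub by auto
    obtain v where v: "v \<in> H" "e * v = 1" using f(1) by (auto simp: units_in_def)
    have "p1 e * p1 v = 1" "p2 e * p2 v = 1" using p_mult[OF eH v(1)] v(2) p_one by auto
    then have pe: "p1 e \<in> units_in H1" "p2 e \<in> units_in H2"
      using decomp[OF eH] decomp[OF v(1)] unfolding units_in_def by auto
    have ac: "w \<in> set us \<Longrightarrow> (atom_in H1 (p1 w) \<and> p2 w \<in> units_in H2) \<or> (p1 w \<in> units_in H1 \<and> atom_in H2 (p2 w))" for w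
      using atom_cases f(3) by auto
    have px: "p1 x = p1 e * prod_list (map p1 us)" "p2 x = p2 e * prod_list (map p2 us)"
      using f(4) p_mult[OF eH prod_in[OF smH usH]] p1_prod[OF usH] p2_prod[OF usH] by auto
    have "p1 x = (p1 e * prod_list (map p1 us2)) * prod_list (map p1 us1)"
      using px(1) prod_list_filter[of p1 us P] unfolding us1_def us2_def by (simp add: ac_simps)
    moreover have "p1 e * prod_list (map p1 us2) \<in> units_in H1"
      using pe ac unfolding us2_def P_def
      by (intro units_mult[OF sm1] units_prod[OF sm1]) auto
    moreover have "\<forall>w\<in>set (map p1 us1). atom_in H1 w"
    proof -
      have "atom_in H1 (p1 w)" if "w \<in> set us" "P w" for w
        using ac[OF that(1)] that(2) unfolding P_def atom_in_def by blast
      then show ?thesis unfolding us1_def by auto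
    qed
    ultimately have "length us1 \<in> lengths H1 (p1 x)" unfolding lengths_def
      by (intro CollectI bexI[of _ "p1 e * prod_list (map p1 us2)"] exI[of _ "map p1 us1"]) auto
    then have len1: "length us1 = l1 (p1 x)" using l1 d by auto
    have "p2 x = (p2 e * prod_list (map p2 us1)) * prod_list (map p2 us2)"
      using px(2) prod_list_filter[of p2 us P] unfolding us1_def us2_def by (simp add: ac_simps)
    moreover have "p2 e * prod_list (map p2 us1) \<in> units_in H2"
      using pe ac unfolding us1_def P_def
      by (intro units_mult[OF sm2] units_prod[OF sm2]) auto
    moreover have "\<forall>w\<in>set (map p2 us2). atom_in H2 w" using ac unfolding us2_def P_def
      by auto
    ultimately have "length us2 \<in> lengths H2 (p2 x)" unfolding lengths_def
      by (intro CollectI bexI[of _ "p2 e * prod_list (map p2 us1)"] exI[of _ "map p2 us2"]) auto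
    moreover have "l = length us1 + length us2"
      using f(2) sum_length_filter_compl[of P us] unfolding us1_def us2_def by simp
    ultimately show "l \<in> (\<lambda>n. l1 (p1 x) + n) ` lengths H2 (p2 x)" using len1 by auto
  qed
  show "(\<lambda>n. l1 (p1 x) + n) ` lengths H2 (p2 x) \<subseteq> lengths H x"
  proof
    fix l assume "l \<in> (\<lambda>n. l1 (p1 x) + n) ` lengths H2 (p2 x)"
    then obtain n where n: "n \<in> lengths H2 (p2 x)" "l = l1 (p1 x) + n" by auto
    obtain e2 us2 where f2: "e2 \<in> units_in H2" "length us2 = n" "\<forall>w\<in>set us2. atom_in H2 w" "p2 x = e2 * prod_list us2"
      using n(1) by (auto simp: lengths_def)
    have "l1 (p1 x) \<in> lengths H1 (p1 x)" using l1 d by auto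
    then obtain e1 us1 where f1: "e1 \<in> units_in H1" "length us1 = l1 (p1 x)" "\<forall>w\<in>set us1. atom_in H1 w" "p1 x = e1 * prod_list us1"
      by (auto simp: lengths_def)
    have "x = (e1 * e2) * prod_list (us1 @ us2)" using d(3) f1(4) f2(4) by (simp add: ac_simps)
    moreover have "e1 * e2 \<in> units_in H" using f1(1) f2(1) unitsH1 unitsH2 units_mult[OF smH] by blast
    moreover have "\<forall>w\<in>set (us1 @ us2). atom_in H w" using f1 f2 atom1 atom2 by auto
    ultimately show "l \<in> lengths H x" using n f1 f2 unfolding lengths_def
      by (intro CollectI bexI[of _ "e1 * e2"] exI[of _ "us1 @ us2"]) auto
  qed
qed

lemma lengths_H2: assumes "b \<in> H2" shows "lengths H b = lengths H2 b"
proof -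
  have "l1 1 = 0" using l1[OF one_H1] zero_len_one[OF sm1] by auto
  then show ?thesis using char[of b] assms sub2 p_H2 by auto
qed

lemma shift:
  assumes u: "atom_in H1 u" and xH: "x \<in> H"
  shows "lengths H (u ^ j * x) = (+) j ` lengths H x"
proof -
  have uH1: "u \<in> H1" using u by (simp add: atom_in_def)
  have uj: "u ^ j \<in> H1" using pow_in[OF sm1 uH1] .
  note d = decomp[OF xH]
  have m: "u ^ j * p1 x \<in> H1" using uj d sm1 by (auto simp: submonoid_def)
  have eq: "u ^ j * x = (u ^ j * p1 x) * p2 x" using d by (simp add: ac_simps)
  have pp: "p1 (u ^ j * x) = u ^ j * p1 x" "p2 (u ^ j * x) = p2 x" using uniq[OF m d(2)] eq by auto
  have "1 \<in> lengths H1 u" unfolding lengths_def using one_unit[OF sm1] u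
    by (intro CollectI bexI[of _ 1] exI[of _ "[u]"]) auto
  then have "j * 1 \<in> lengths H1 (u ^ j)" by (rule lengths_pow[OF sm1])
  then have "j + l1 (p1 x) \<in> lengths H1 (u ^ j * p1 x)"
    using lengths_mult[OF sm1, of j "u^j" "l1 (p1 x)" "p1 x"] l1 d by auto
  then have "l1 (u ^ j * p1 x) = j + l1 (p1 x)" using l1[OF m] by auto
  have uxH: "u ^ j * x \<in> H" using uj sub1 xH smH by (auto simp: submonoid_def)
  show ?thesis unfolding char[OF uxH] char[OF xH] pp \<open>l1 (u ^ j * p1 x) = j + l1 (p1 x)\<close>
    by (auto simp: image_image add.assoc)
qed

end


lemma BF_sm: "BF_monoid H \<Longrightarrow> submonoid H"
  by (simp add: BF_monoid_def monoid_in_def)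

lemma BF_fin: "BF_monoid H \<Longrightarrow> a \<in> H \<Longrightarrow> finite (lengths H a) \<and> lengths H a \<noteq> {}"
  by (simp add: BF_monoid_def)

lemma pow_bounds:
  assumes BF: "BF_monoid H" and c: "c \<in> H"
  shows "Max (lengths H (c^k)) \<ge> k * Max (lengths H c)" "Min (lengths H (c^k)) \<le> k * Min (lengths H c)"
proof -
  have sm: "submonoid H" using BF_sm[OF BF] .
  have f: "finite (lengths H c)" "lengths H c \<noteq> {}" using BF_fin[OF BF c] by auto
  have ck: "c^k \<in> H" using pow_in[OF sm c] .
  have fk: "finite (lengths H (c^k))" using BF_fin[OF BF ck] by auto
  have "k * Max (lengths H c) \<in> lengths H (c^k)" using lengths_pow[OF sm] Max_in[OF f] by blast
  then show "Max (lengths H (c^k)) \<ge> k * Max (lengths H c)" using Max_ge[OF fk] by blast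
  have "k * Min (lengths H c) \<in> lengths H (c^k)" using lengths_pow[OF sm] Min_in[OF f] by blast
  then show "Min (lengths H (c^k)) \<le> k * Min (lengths H c)" using Min_le[OF fk] by blast
qed

lemma power_exact:
  assumes BF: "BF_monoid H" and c: "c \<in> H" and r1: "rho_set (lengths H c) > 1"
    and eq: "rho_set (lengths H (c^k)) = rho_set (lengths H c)"
  shows "Max (lengths H (c^k)) = k * Max (lengths H c) \<and> Min (lengths H (c^k)) = k * Min (lengths H c)"
proof -
  define A where "A = Max (lengths H (c^k))"
  define B where "B = Min (lengths H (c^k))"
  define M where "M = Max (lengths H c)"
  define m where "m = Min (lengths H c)"
  have h1: "m > 0" "rho_set (lengths H c) = real M / real m" using rho_gt1[OF r1] unfolding M_def m_def by auto
  have h2: "B > 0" "rho_set (lengths H (c^k)) = real A / real B" using rho_gt1[of "lengths H (c^k)"] r1 eq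
    unfolding A_def B_def by auto
  have Mm: "real M / real m > 1" using h1 r1 by simp
  then have Mpos: "M > 0" using h1 by (cases "M = 0") auto
  have AB: "real A / real B = real M / real m" using h1 h2 eq by simp
  then have AB': "real A * real m = real M * real B" using h1 h2 by (simp add: field_simps)
  have b1: "real A \<ge> real k * real M" "real B \<le> real k * real m"
    using pow_bounds[OF BF c, of k] unfolding A_def B_def M_def m_def by (simp_all add: of_nat_mult[symmetric] del: of_nat_mult)
  have "real M * real B \<le> real k * real M * real m"
    using mult_left_mono[OF b1(2), of "real M"] by (simp add: ac_simps)
  moreover have "real k * real M * real m \<le> real A * real m" using b1(1) by (simp add: mult_right_mono)
  ultimately have "real A * real m = real k * real M * real m" using AB' by linarith
  then have "real A = real k * real M" using h1 by simp
  then have e1: "A = k * M" by (metis of_nat_eq_iff of_nat_mult)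
  have "real M * real B = real A * real m" using AB' by simp
  also have "\<dots> = real M * (real k * real m)" using \<open>real A = real k * real M\<close> by (simp add: ac_simps)
  finally have "real M * real B = real M * (real k * real m)" .
  moreover have "real M \<noteq> 0" using Mpos by simp
  ultimately have "real B = real k * real m" by simp
  then have "B = k * m" by (metis of_nat_eq_iff of_nat_mult)
  then show ?thesis using e1 unfolding A_def B_def M_def m_def by simp
qed

lemma rat_frac:
  assumes "1 < q"
  obtains r s :: nat where "s > 0" "r > s" "(of_rat q :: real) = real r / real s"
proof -
  obtain a b where ab: "quotient_of q = (a, b)" by (cases "quotient_of q")
  have b0: "b > 0" using quotient_of_denom_pos[OF ab] .
  have qe: "q = of_int a / of_int b" using quotient_of_div[OF ab] .
  have "of_int a / of_int b > (1::rat)" using assms qe by simp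
  then have ab': "a > b" using b0 by (simp add: field_simps)
  have "(of_rat q :: real) = of_int a / of_int b" using qe by (simp add: of_rat_divide)
  also have "\<dots> = real (nat a) / real (nat b)" using b0 ab' by simp
  finally show ?thesis using that[of "nat b" "nat a"] b0 ab' by simp
qed

lemma shifted_MaxMin:
  assumes "finite L" "L \<noteq> {}"
  shows "Max ((+) (j::nat) ` L) = j + Max L" "Min ((+) j ` L) = j + Min L"
proof -
  have "mono ((+) j)" by (simp add: mono_def)
  then show "Max ((+) (j::nat) ` L) = j + Max L" "Min ((+) j ` L) = j + Min L"
    using mono_Max_commute[of "(+) j" L] mono_Min_commute[of "(+) j" L] assms by auto
qed

lemma rho_exact:
  assumes "finite L" "L \<noteq> {}" "Min L > 0"
  shows "rho_set L = real (Max L) / real (Min L)"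
  using assms by (auto simp: rho_set_def)

lemma part_b:
  assumes BF: "BF_monoid H" and acc: "accepted_elasticity H"
  shows "cond_b H"
  unfolding cond_b_def
proof (intro allI impI)
  fix q :: rat assume q: "1 < q \<and> ereal (of_rat q) < elasticity H"
  have sm: "submonoid H" using BF_sm[OF BF] .
  obtain a where a: "a \<in> H" "ereal (rho_set (lengths H a)) = elasticity H"
    using acc by (auto simp: accepted_elasticity_def length_sets_def)
  have "ereal (of_rat q) < ereal (rho_set (lengths H a))" using q a(2) by simp
  then have qa: "of_rat q < rho_set (lengths H a)" by simp
  have "(1::real) < of_rat q" using q by (metis of_rat_1 of_rat_less)
  then have r1: "rho_set (lengths H a) > 1" using qa by linarith
  have le: "ereal (rho_set (lengths H x)) \<le> elasticity H" if "x \<in> H" for x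
    unfolding elasticity_def length_sets_def using that by (auto intro: SUP_upper)
  have "of_rat q < rho_set (lengths H a) \<and>
          (\<forall>k\<ge>1. rho_set (lengths H (a ^ k)) = rho_set (lengths H a))"
  proof (intro conjI allI impI)
    show "of_rat q < rho_set (lengths H a)" by fact
    fix k :: nat assume k: "k \<ge> 1"
    have ak: "a^k \<in> H" using pow_in[OF sm a(1)] .
    have "ereal (rho_set (lengths H (a^k))) \<le> ereal (rho_set (lengths H a))" using le[OF ak] a by simp
    then have up: "rho_set (lengths H (a^k)) \<le> rho_set (lengths H a)" by simp
    define M where "M = Max (lengths H a)"
    define m where "m = Min (lengths H a)"
    have h1: "m > 0" "rho_set (lengths H a) = real M / real m" using rho_gt1[OF r1] unfolding M_def m_def by auto
    have fk: "finite (lengths H (a^k))" "lengths H (a^k) \<noteq> {}" using BF_fin[OF BF ak] by auto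
    have nu: "a \<notin> units_in H"
    proof
      assume "a \<in> units_in H"
      then have "lengths H a \<subseteq> {0}" using unit_lengths[OF sm] by blast
      then have "lengths H a = {0}" using BF_fin[OF BF a(1)] by blast
      then show False using r1 by (simp add: rho_set_def)
    qed
    have "0 \<notin> lengths H (a^k)" using zero_len_unit pow_unit[OF sm a(1) k] nu by blast
    then have Bpos: "Min (lengths H (a^k)) > 0" using Min_in[OF fk] by (metis gr0I)
    note b = pow_bounds[OF BF a(1), of k]
    have "real M / real m = (real k * real M) / (real k * real m)" using k by simp
    also have "\<dots> \<le> real (Max (lengths H (a^k))) / (real k * real m)"
      using b(1) h1 k unfolding M_def by (intro divide_right_mono) (simp_all add: of_nat_mult[symmetric] del: of_nat_mult)
    also have "\<dots> \<le> real (Max (lengths H (a^k))) / real (Min (lengths H (a^k)))"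
      using b(2) Bpos h1 k unfolding m_def by (intro divide_left_mono) (simp_all add: of_nat_mult[symmetric] del: of_nat_mult)
    finally have "rho_set (lengths H a) \<le> rho_set (lengths H (a^k))"
      using h1 rho_exact[OF fk Bpos] by simp
    then show "rho_set (lengths H (a ^ k)) = rho_set (lengths H a)" using up by simp
  qed
  then show "\<exists>c\<in>H. of_rat q < rho_set (lengths H c) \<and>
          (\<forall>k\<ge>1. rho_set (lengths H (c ^ k)) = rho_set (lengths H c))" using a(1) by blast
qed



lemma atom_exists:
  assumes "cond_a H H1 H2" shows "\<exists>u. atom_in H1 u"
proof -
  have hf: "half_factorial H1" and nt: "units_in H1 \<noteq> H1" using assms by (auto simp: cond_a_def)
  obtain a where a: "a \<in> H1" "a \<notin> units_in H1" using nt units_in_sub by blast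
  have "card (lengths H1 a) = 1" using hf a by (auto simp: half_factorial_def)
  then obtain l where "l \<in> lengths H1 a" by (auto simp: card_1_singleton_iff)
  then obtain e us where f: "e \<in> units_in H1" "\<forall>x\<in>set us. atom_in H1 x" "a = e * prod_list us"
    by (auto simp: lengths_def)
  show ?thesis
  proof (cases us)
    case Nil then show ?thesis using f a by simp
  next
    case (Cons w rest) then show ?thesis using f by auto
  qed
qed

lemma interp: "BF_monoid H \<Longrightarrow> cond_a H H1 H2 \<Longrightarrow> dprod_hf H H1 H2"
  by (unfold_locales) (auto simp: BF_sm cond_a_def)

lemma part_c:
  assumes BF: "BF_monoid H" and ca: "cond_a H H1 H2" and cb: "cond_b H"
  shows "fully_elastic H"
  unfolding fully_elastic_def
proof (intro allI impI)
  interpret dprod_hf H H1 H2 using interp[OF BF ca] .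
  obtain u where u: "atom_in H1 u" using atom_exists[OF ca] by blast
  have sm: "submonoid H" using BF_sm[OF BF] .
  fix q :: rat assume q: "1 < q \<and> ereal (of_rat q) < elasticity H"
  obtain c where c: "c \<in> H" "of_rat q < rho_set (lengths H c)"
    "\<forall>k\<ge>1. rho_set (lengths H (c ^ k)) = rho_set (lengths H c)"
    using cb q unfolding cond_b_def by blast
  have "(1::real) < of_rat q" using q by (metis of_rat_1 of_rat_less)
  then have r1: "rho_set (lengths H c) > 1" using c by linarith
  obtain r s where rs: "s > 0" "r > s" "(of_rat q :: real) = real r / real s" using rat_frac q by blast
  define M where "M = Max (lengths H c)"
  define m where "m = Min (lengths H c)"
  have h1: "m > 0" "rho_set (lengths H c) = real M / real m" using rho_gt1[OF r1] unfolding M_def m_def by auto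
  define k where "k = r - s"
  have k1: "k \<ge> 1" using rs unfolding k_def by simp
  have ex: "Max (lengths H (c^k)) = k * M" "Min (lengths H (c^k)) = k * m"
    using power_exact[OF BF c(1) r1, of k] c(3) k1 unfolding M_def m_def by auto
  have "real r / real s < real M / real m" using c(2) rs h1 by simp
  then have "real r * real m < real M * real s" using rs h1 by (simp add: field_simps)
  then have srm: "r * m < s * M" by (metis mult.commute of_nat_less_iff of_nat_mult)
  have Mm: "real M / real m > 1" using h1 r1 by simp
  then have Mm': "M > m" using h1 by (simp add: field_simps)
  define j where "j = s * M - r * m"
  have ck: "c^k \<in> H" using pow_in[OF sm c(1)] .
  have uj: "u^j \<in> H" using pow_in[OF sm] u sub1 by (auto simp: atom_in_def)
  define x where "x = u^j * c^k"
  have xH: "x \<in> H" using uj ck sm unfolding x_def by (auto simp: submonoid_def)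
  have Lx: "lengths H x = (+) j ` lengths H (c^k)" unfolding x_def using shift[OF u ck] .
  have fk: "finite (lengths H (c^k))" "lengths H (c^k) \<noteq> {}" using BF_fin[OF BF ck] by auto
  have MaxL: "Max (lengths H x) = j + k * M" and MinL: "Min (lengths H x) = j + k * m"
    using shifted_MaxMin[OF fk, of j] ex Lx by auto
  have fx: "finite (lengths H x)" "lengths H x \<noteq> {}" using BF_fin[OF BF xH] by auto
  have Mpos: "Min (lengths H x) > 0" using MinL k1 h1 by simp
  have rj: "real j = real s * real M - real r * real m" unfolding j_def using srm
    by (simp add: of_nat_diff)
  have rk: "real k = real r - real s" unfolding k_def using rs by (simp add: of_nat_diff)
  have e1: "real (j + k * M) = real r * (real M - real m)" by (simp only: of_nat_add of_nat_mult rj rk) (simp add: algebra_simps)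
  have e2: "real (j + k * m) = real s * (real M - real m)" by (simp only: of_nat_add of_nat_mult rj rk) (simp add: algebra_simps)
  have "rho_set (lengths H x) = real (j + k * M) / real (j + k * m)"
    using rho_exact[OF fx Mpos] MaxL MinL by simp
  also have "\<dots> = real r / real s" unfolding e1 e2 using Mm' by simp
  finally have "rho_set (lengths H x) = of_rat q" using rs by simp
  then show "\<exists>L\<in>length_sets H. rho_set L = of_rat q" using xH unfolding length_sets_def by blast
qed

lemma part_d:
  assumes BF: "BF_monoid H" and ca: "cond_a H H1 H2" and cb: "cond_b' H2"
  shows "fully_elastic H"
  unfolding fully_elastic_def
proof (intro allI impI)
  interpret dprod_hf H H1 H2 using interp[OF BF ca] .
  obtain u where u: "atom_in H1 u" using atom_exists[OF ca] by blast
  have sm: "submonoid H" using BF_sm[OF BF] .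
  fix q :: rat assume q: "1 < q \<and> ereal (of_rat q) < elasticity H"
  obtain r s where rs: "s > 0" "r > s" "(of_rat q :: real) = real r / real s" using rat_frac q by blast
  define m' where "m' = 2 * (r - s) + 2"
  have "m' \<ge> 2" unfolding m'_def by simp
  then obtain L where "L \<in> lengths H2 ` H2" "Min L = 2" "Max L = m'"
    using cb unfolding cond_b'_def length_sets_def by blast
  then obtain b where b: "b \<in> H2" "Min (lengths H2 b) = 2" "Max (lengths H2 b) = m'" by blast
  have bH: "b \<in> H" using b sub2 by auto
  have Lb: "lengths H b = lengths H2 b" using lengths_H2[OF b(1)] .
  define j where "j = 2 * s - 2"
  have uj: "u^j \<in> H" using pow_in[OF sm] u sub1 by (auto simp: atom_in_def)
  define x where "x = u^j * b"
  have xH: "x \<in> H" using uj bH sm unfolding x_def by (auto simp: submonoid_def)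
  have Lx: "lengths H x = (+) j ` lengths H b" unfolding x_def using shift[OF u bH] .
  have fb: "finite (lengths H b)" "lengths H b \<noteq> {}" using BF_fin[OF BF bH] by auto
  have MaxL: "Max (lengths H x) = 2 * r" and MinL: "Min (lengths H x) = 2 * s"
    using shifted_MaxMin[OF fb, of j] Lb b rs Lx unfolding j_def m'_def by auto
  have fx: "finite (lengths H x)" "lengths H x \<noteq> {}" using BF_fin[OF BF xH] by auto
  have Mpos: "Min (lengths H x) > 0" using MinL rs by simp
  have "rho_set (lengths H x) = real (2 * r) / real (2 * s)"
    using rho_exact[OF fx Mpos] MaxL MinL by simp
  also have "\<dots> = real r / real s" by simp
  finally have "rho_set (lengths H x) = of_rat q" using rs by simp
  then show "\<exists>L\<in>length_sets H. rho_set L = of_rat q" using xH unfolding length_sets_def by blast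
qed



lemma prod_list_const: "\<forall>x\<in>set us. x = p \<Longrightarrow> prod_list us = p ^ length us"
  by (induction us) auto

context
  fixes H :: "'a::comm_monoid_mult set" and p :: 'a
  assumes BF: "BF_monoid H" and pr: "prime_in H p" and ca: "cancellative_in H p"
begin

lemma sm: "submonoid H" using BF_sm[OF BF] .
lemma ucanc: "a \<in> H \<Longrightarrow> u \<in> H \<Longrightarrow> a = a * u \<Longrightarrow> u \<in> units_in H"
  using BF by (auto simp: BF_monoid_def monoid_in_def)
lemma pH: "p \<in> H" and pnu: "p \<notin> units_in H" using pr by (auto simp: prime_in_def)
lemma powH: "p ^ n \<in> H" using pow_in[OF sm pH] .
lemma pow_nonunit: "n \<ge> 1 \<Longrightarrow> p ^ n \<notin> units_in H" using pow_unit[OF sm pH] pnu by blast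

lemma pow_inj_lt: assumes "n < m" "p ^ n = p ^ m" shows False
proof -
  have "p ^ m = p ^ n * p ^ (m - n)" using assms(1) by (simp add: power_add[symmetric])
  then have "p ^ (m - n) \<in> units_in H" using ucanc[OF powH powH] assms(2) by metis
  then show False using pow_nonunit[of "m - n"] assms(1) by simp
qed

lemma pow_inj: "p ^ n = p ^ m \<Longrightarrow> n = m"
  using pow_inj_lt[of n m] pow_inj_lt[of m n] by (metis linorder_neqE_nat)

lemma cancel_pow: "b \<in> H \<Longrightarrow> c \<in> H \<Longrightarrow> p ^ n * b = p ^ n * c \<Longrightarrow> b = c"
proof (induction n)
  case (Suc n)
  have "p * (p ^ n * b) = p * (p ^ n * c)" using Suc.prems by (simp add: mult.assoc)
  then have "p ^ n * b = p ^ n * c" using ca Suc.prems powH sm by (auto simp: cancellative_in_def submonoid_def)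
  then show ?case using Suc by blast
qed simp

lemma p_atom: "atom_in H p"
proof -
  have "x \<in> units_in H \<or> y \<in> units_in H" if xy: "x \<in> H" "y \<in> H" "p = x * y" for x y
  proof -
    have "dvd_in H p (x * y)" unfolding dvd_in_def using sm xy(3) by (intro bexI[of _ 1]) (auto simp: submonoid_def)
    then have "dvd_in H p x \<or> dvd_in H p y" using pr xy(1,2) unfolding prime_in_def by blast
    then show ?thesis
    proof
      assume "dvd_in H p x"
      then obtain z where z: "z \<in> H" "x = p * z" by (auto simp: dvd_in_def)
      have zy: "z * y \<in> H" using z(1) xy(2) sm by (auto simp: submonoid_def)
      have "p = x * y" by (rule xy(3))
      also have "\<dots> = p * (z * y)" unfolding z(2) by (simp add: mult.assoc)
      finally have "z * y \<in> units_in H" by (rule ucanc[OF pH zy])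
      then have "y \<in> units_in H" using unit_factor[OF sm xy(2) z(1)] by (simp add: mult.commute)
      then show ?thesis by simp
    next
      assume "dvd_in H p y"
      then obtain z where z: "z \<in> H" "y = p * z" by (auto simp: dvd_in_def)
      have zx: "z * x \<in> H" using z(1) xy(1) sm by (auto simp: submonoid_def)
      have "p = x * y" by (rule xy(3))
      also have "\<dots> = p * (z * x)" unfolding z(2) by (simp add: ac_simps)
      finally have "z * x \<in> units_in H" by (rule ucanc[OF pH zx])
      then have "x \<in> units_in H" using unit_factor[OF sm xy(1) z(1)] by (simp add: mult.commute)
      then show ?thesis by simp
    qed
  qed
  then show ?thesis using pH pnu by (auto simp: atom_in_def)
qed

lemma decomp_exists:
  assumes a: "a \<in> H"
  shows "\<exists>n b. b \<in> H \<and> \<not> dvd_in H p b \<and> a = p ^ n * b"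
proof -
  define N where "N = {n. \<exists>b\<in>H. a = p ^ n * b}"
  have f: "finite (lengths H a)" "lengths H a \<noteq> {}" using BF_fin[OF BF a] by auto
  have bound: "n \<le> Max (lengths H a)" if nN: "n \<in> N" for n
  proof -
    obtain b where b: "b \<in> H" "a = p ^ n * b" using nN unfolding N_def by auto
    obtain l where l: "l \<in> lengths H b" using BF_fin[OF BF b(1)] by auto
    have "1 \<in> lengths H p" unfolding lengths_def using one_unit[OF sm] p_atom
      by (intro CollectI bexI[of _ 1] exI[of _ "[p]"]) auto
    then have "n * 1 \<in> lengths H (p ^ n)" by (rule lengths_pow[OF sm])
    then have "n + l \<in> lengths H a" using lengths_mult[OF sm _ l] b by auto
    then show ?thesis using Max_ge[OF f(1)] by fastforce
  qed
  have finN: "finite N" using bound by (meson finite_nat_set_iff_bounded_le)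
  have "0 \<in> N" using a unfolding N_def by auto
  then have "Max N \<in> N" using finN Max_in by blast
  then obtain b where b: "b \<in> H" "a = p ^ Max N * b" unfolding N_def by auto
  have "\<not> dvd_in H p b"
  proof
    assume "dvd_in H p b"
    then obtain c where c: "c \<in> H" "b = p * c" by (auto simp: dvd_in_def)
    then have "a = p ^ Suc (Max N) * c" using b by (simp add: ac_simps)
    then have "Suc (Max N) \<in> N" using c unfolding N_def by blast
    then show False using Max_ge[OF finN] by fastforce
  qed
  then show ?thesis using b by blast
qed

lemma inj_aux:
  assumes "n \<le> m" "b \<in> H" "b' \<in> H" "\<not> dvd_in H p b" "p ^ n * b = p ^ m * b'"
  shows "n = m \<and> b = b'"
proof -
  have "p ^ m = p ^ n * p ^ (m - n)" using assms(1) by (metis le_add_diff_inverse power_add)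
  then have "p ^ m * b' = p ^ n * (p ^ (m - n) * b')" by (simp add: mult.assoc)
  then have e: "b = p ^ (m - n) * b'" using cancel_pow[of b "p ^ (m - n) * b'" n] assms powH sm
    by (auto simp: submonoid_def)
  show ?thesis
  proof (cases "m - n")
    case 0 then show ?thesis using e assms(1) by simp
  next
    case (Suc k)
    then have "b = p * (p ^ k * b')" using e by (simp add: mult.assoc)
    then have "dvd_in H p b" using powH assms(3) sm by (auto simp: dvd_in_def submonoid_def)
    then show ?thesis using assms(4) by simp
  qed
qed

lemma units_H1: "units_in (range (\<lambda>n::nat. p ^ n)) = {1}"
proof
  show "units_in (range (\<lambda>n::nat. p ^ n)) \<subseteq> {1}"
  proof
    fix x assume "x \<in> units_in (range (\<lambda>n::nat. p ^ n))"
    then obtain a b where "x = p ^ a" "p ^ a * p ^ b = 1" by (auto simp: units_in_def)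
    then have "p ^ (a + b) = p ^ 0" by (simp add: power_add)
    then have "a + b = 0" using pow_inj by blast
    then show "x \<in> {1}" using \<open>x = p ^ a\<close> by simp
  qed
  show "{1} \<subseteq> units_in (range (\<lambda>n::nat. p ^ n))"
  proof -
    have "1 \<in> range (\<lambda>n::nat. p ^ n)" by (rule range_eqI[of _ _ 0]) simp
    then show ?thesis unfolding units_in_def by auto
  qed
qed

lemma p_ne1: "p ^ k \<noteq> 1" if "k \<ge> 1" using pow_inj[of k 0] that by auto

lemma atoms_H1: "atom_in (range (\<lambda>n::nat. p ^ n)) x \<longleftrightarrow> x = p"
proof
  assume at: "atom_in (range (\<lambda>n::nat. p ^ n)) x"
  then obtain k where k: "x = p ^ k" by (auto simp: atom_in_def)
  have "k \<noteq> 0" using at k units_H1 by (auto simp: atom_in_def)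
  moreover have "\<not> k \<ge> 2"
  proof
    assume "k \<ge> 2"
    then have "1 + (k - 1) = k" by simp
    then have "x = p ^ 1 * p ^ (k - 1)" using k by (metis power_add)
    moreover have "p ^ 1 \<notin> units_in (range (\<lambda>n::nat. p ^ n))" "p ^ (k-1) \<notin> units_in (range (\<lambda>n::nat. p ^ n))"
      using units_H1 p_ne1[of 1] p_ne1[of "k-1"] \<open>k \<ge> 2\<close> by auto
    ultimately show False using at unfolding atom_in_def by blast
  qed
  ultimately have "k = 1" by simp
  then show "x = p" using k by simp
next
  assume x: "x = p"
  have "a \<in> units_in (range (\<lambda>n::nat. p ^ n)) \<or> b \<in> units_in (range (\<lambda>n::nat. p ^ n))"
    if ab: "a \<in> range (\<lambda>n::nat. p ^ n)" "b \<in> range (\<lambda>n::nat. p ^ n)" "p = a * b" for a b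
  proof -
    obtain i j where ij: "a = p ^ i" "b = p ^ j" using ab(1,2) by auto
    then have "p ^ (i + j) = a * b" by (simp add: power_add)
    then have "p ^ 1 = p ^ (i + j)" using ab(3) by (metis power_one_right)
    then have "i + j = 1" using pow_inj by metis
    then show ?thesis using ij units_H1 by (cases i) auto
  qed
  moreover have "p \<in> range (\<lambda>n::nat. p ^ n)" by (auto intro: range_eqI[of _ _ 1])
  moreover have "p \<notin> units_in (range (\<lambda>n::nat. p ^ n))" using units_H1 p_ne1[of 1] by auto
  ultimately show "atom_in (range (\<lambda>n::nat. p ^ n)) x" unfolding x atom_in_def by blast
qed

lemma lengths_H1: "lengths (range (\<lambda>n::nat. p ^ n)) (p ^ n) = {n}"
proof -
  have "lengths (range (\<lambda>n::nat. p ^ n)) (p ^ n) = {l. \<exists>us. length us = l \<and> (\<forall>x\<in>set us. x = p) \<and> p ^ n = prod_list us}"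
    unfolding lengths_def units_H1 atoms_H1 by auto
  also have "\<dots> = {n}"
  proof safe
    fix us assume "\<forall>x\<in>set us. x = p" "p ^ n = prod_list us"
    then show "length us = n" using prod_list_const pow_inj by metis
  next
    show "\<exists>us. length us = n \<and> (\<forall>x\<in>set us. x = p) \<and> p ^ n = prod_list us"
      by (intro exI[of _ "replicate n p"]) auto
  qed
  finally show ?thesis .
qed

lemma part_a: "cond_a H (range (\<lambda>n::nat. p ^ n)) {a \<in> H. \<not> dvd_in H p a}"
proof -
  let ?H1 = "range (\<lambda>n::nat. p ^ n)" and ?H2 = "{a \<in> H. \<not> dvd_in H p a}"
  have s1: "submonoid ?H1" unfolding submonoid_def
    by (auto simp: power_add[symmetric] intro: range_eqI[of _ _ 0])
  have n1: "\<not> dvd_in H p 1"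
  proof
    assume "dvd_in H p 1"
    then have "p \<in> units_in H" using pH by (auto simp: dvd_in_def units_in_def)
    then show False using pnu by simp
  qed
  have s2: "submonoid ?H2" unfolding submonoid_def
    using n1 sm pr by (auto simp: submonoid_def prime_in_def)
  have sub1: "?H1 \<subseteq> H" using powH by auto
  have inj: "inj_on (\<lambda>(a, b). a * b) (?H1 \<times> ?H2)"
  proof (rule inj_onI, clarify)
    fix n b m b' assume h: "b \<in> H" "\<not> dvd_in H p b" "b' \<in> H" "\<not> dvd_in H p b'"
      "p ^ n * b = p ^ m * b'"
    show "p ^ n = p ^ m \<and> b = b'"
    proof (cases "n \<le> m")
      case True then show ?thesis using inj_aux[of n m b b'] h by auto
    next
      case False then show ?thesis using inj_aux[of m n b' b] h by auto
    qed
  qed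
  have img: "(\<lambda>(a, b). a * b) ` (?H1 \<times> ?H2) = H"
  proof
    show "(\<lambda>(a, b). a * b) ` (?H1 \<times> ?H2) \<subseteq> H" using powH sm by (auto simp: submonoid_def)
    show "H \<subseteq> (\<lambda>(a, b). a * b) ` (?H1 \<times> ?H2)"
    proof
      fix a assume "a \<in> H"
      then obtain n b where "b \<in> H" "\<not> dvd_in H p b" "a = p ^ n * b" using decomp_exists by blast
      then show "a \<in> (\<lambda>(a, b). a * b) ` (?H1 \<times> ?H2)" by (auto intro!: image_eqI[of _ _ "(p ^ n, b)"])
    qed
  qed
  have idp: "internal_direct_product H ?H1 ?H2"
    unfolding internal_direct_product_def bij_betw_def using s1 s2 sub1 inj img by auto
  have hf: "half_factorial ?H1" unfolding half_factorial_def using lengths_H1 by auto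
  have "p \<in> ?H1" by (auto intro: range_eqI[of _ _ 1])
  moreover have "p \<notin> units_in ?H1" using units_H1 p_ne1[of 1] by auto
  ultimately have "units_in ?H1 \<noteq> ?H1" by blast
  then show ?thesis using idp hf by (simp add: cond_a_def)
qed

end


theorem proposition3p2:
  fixes H :: "'a::comm_monoid_mult set"
  assumes "BF_monoid H"
  shows "(\<forall>p. prime_in H p \<and> cancellative_in H p \<longrightarrow>
            cond_a H (range (\<lambda>n::nat. p ^ n)) {a \<in> H. \<not> dvd_in H p a})
       \<and> (accepted_elasticity H \<longrightarrow> cond_b H)
       \<and> ((\<exists>H1 H2. cond_a H H1 H2) \<and> cond_b H \<longrightarrow> fully_elastic H)
       \<and> ((\<exists>H1 H2. cond_a H H1 H2 \<and> cond_b' H2) \<longrightarrow> fully_elastic H)"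
  using part_a[OF assms] part_b[OF assms] part_c[OF assms] part_d[OF assms] by blast

end
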